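(* Let $b:\mathbb R^n\to\mathbb R^n$ be locally Lipschitz continuous and suppose there are $R\ge0$, $\kappa>0$ with $\langle b(x)-b(y),x-y\rangle\le-\kappa|x-y|^2$ for all $x,y\in\mathbb R^n\setminus B_R$. Then for any $\bar\kappa\in(0,\kappa)$ there is $\bar R>0$ such that $\langle b(x)-b(y),x-y\rangle\le-\bar\kappa|x-y|^2$ for all $y\in\mathbb R^n$ and all $|x|>\bar R$.
   Context: $B_R$ denotes the closed (or open) ball of radius $R$ about the origin in $\mathbb R^n$. *)

theory Defs
  imports "HOL-Analysis.Analysis"
begin

definition locally_lipschitz :: "('a::metric_space \<Rightarrow> 'b::metric_space) \<Rightarrow> bool" where
  "locally_lipschitz f \<longleftrightarrow> (\<forall>x. \<exists>e>0. \<exists>L. L-lipschitz_on (ball x e) f)"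

end

theory Submission
  imports Defs
begin

lemma ll_cont:
  assumes "locally_lipschitz (b :: 'a::metric_space \<Rightarrow> 'b::metric_space)"
  shows "continuous_on UNIV b"
proof -
  have "isCont b x" for x
  proof -
    obtain e L where e: "e > 0" and L: "L-lipschitz_on (ball x e) b"
      using assms unfolding locally_lipschitz_def by blast
    have "continuous_on (ball x e) b" using L by (rule lipschitz_on_continuous_on)
    then show ?thesis using e by (simp add: continuous_on_eq_continuous_at)
  qed
  then show ?thesis by (simp add: continuous_at_imp_continuous_on)
qed

theorem lemma2p9:
  fixes b :: "real^'n \<Rightarrow> real^'n" and R \<kappa> :: real
  assumes "locally_lipschitz b"
    and "R \<ge> 0" and "\<kappa> > 0"
    and "\<And>x y. norm x > R \<Longrightarrow> norm y > R \<Longrightarrow>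
           (b x - b y) \<bullet> (x - y) \<le> - \<kappa> * (norm (x - y))\<^sup>2"
  shows "\<forall>\<kappa>'. 0 < \<kappa>' \<and> \<kappa>' < \<kappa> \<longrightarrow>
           (\<exists>R'>0. \<forall>x y. norm x > R' \<longrightarrow>
              (b x - b y) \<bullet> (x - y) \<le> - \<kappa>' * (norm (x - y))\<^sup>2)"
proof (intro allI impI)
  fix k :: real
  assume k: "0 < k \<and> k < \<kappa>"
  define c where "c = 2 * R + 1"
  have "compact (b ` cball 0 (3 * R + 1))"
    using ll_cont[OF assms(1)] by (intro compact_continuous_image) (auto intro: continuous_on_subset)
  then obtain M where M: "M > 0" "\<And>z. z \<in> b ` cball 0 (3 * R + 1) \<Longrightarrow> norm z \<le> M"
    using compact_imp_bounded bounded_pos by metis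
  have Mb: "norm (b z) \<le> M" if "norm z \<le> 3 * R + 1" for z
    using M(2) that by auto
  define R' where "R' = R + 2 * M / (\<kappa> - k) + 1"
  have pos: "2 * M / (\<kappa> - k) > 0" using M k by auto
  show "\<exists>R'>0. \<forall>x y. norm x > R' \<longrightarrow>
              (b x - b y) \<bullet> (x - y) \<le> - k * (norm (x - y))\<^sup>2"
  proof (intro exI[of _ R'] conjI allI impI)
    show "R' > 0" using pos assms(2) unfolding R'_def by linarith
    fix x y :: "real^'n"
    assume x: "norm x > R'"
    define d where "d = norm (x - y)"
    have xR: "norm x > R" using x pos unfolding R'_def by linarith
    show "(b x - b y) \<bullet> (x - y) \<le> - k * (norm (x - y))\<^sup>2"
    proof (cases "norm y > R")
      case True
      have "- \<kappa> * d\<^sup>2 \<le> - k * d\<^sup>2" using k by (intro mult_right_mono) auto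
      then show ?thesis using assms(4)[OF xR True] unfolding d_def by linarith
    next
      case False
      have "norm x - norm y \<le> d" unfolding d_def by (rule norm_triangle_ineq2)
      hence dge: "d > 2 * M / (\<kappa> - k)" using x False unfolding R'_def by linarith
      hence dpos: "d > 0" using pos by linarith
      define z where "z = y - (c / d) *\<^sub>R (x - y)"
      have nc: "norm ((c / d) *\<^sub>R (x - y)) = c"
        using dpos assms(2) unfolding d_def c_def by simp
      have "norm z \<ge> c - norm y" unfolding z_def using nc norm_triangle_ineq2[of "(c / d) *\<^sub>R (x - y)" y]
        by (simp add: norm_minus_commute)
      hence zR: "norm z > R" using False unfolding c_def by linarith
      have "norm z \<le> norm y + c" unfolding z_def using nc norm_triangle_ineq4[of y "(c / d) *\<^sub>R (x - y)"]
        by simp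
      hence zb: "norm z \<le> 3 * R + 1" using False unfolding c_def by linarith
      define s where "s = 1 + c / d"
      have spos: "s \<ge> 1" unfolding s_def using dpos assms(2) c_def by simp
      have xz: "x - z = s *\<^sub>R (x - y)" unfolding z_def s_def by (simp add: algebra_simps)
      have "(b x - b z) \<bullet> (x - z) \<le> - \<kappa> * (norm (x - z))\<^sup>2" using assms(4)[OF xR zR] .
      hence "s * ((b x - b z) \<bullet> (x - y)) \<le> - \<kappa> * (s * d)\<^sup>2"
        unfolding xz d_def using spos by (simp add: inner_commute)
      hence "s * ((b x - b z) \<bullet> (x - y)) \<le> s * (- \<kappa> * s * d\<^sup>2)"
        by (simp add: power2_eq_square algebra_simps)
      hence "(b x - b z) \<bullet> (x - y) \<le> - \<kappa> * s * d\<^sup>2" using spos by (metis mult_le_cancel_left_pos zero_less_one less_le_trans)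
      moreover have "- \<kappa> * s * d\<^sup>2 \<le> - \<kappa> * d\<^sup>2"
        using spos assms(3) dpos by (simp add: mult_le_cancel_right)
      ultimately have A: "(b x - b z) \<bullet> (x - y) \<le> - \<kappa> * d\<^sup>2" by linarith
      have "(b z - b y) \<bullet> (x - y) \<le> norm (b z - b y) * d"
        unfolding d_def by (rule norm_cauchy_schwarz)
      also have "norm (b z - b y) \<le> 2 * M"
        using Mb[OF zb] Mb[of y] False assms(2) norm_triangle_ineq4[of "b z" "b y"] by linarith
      hence "norm (b z - b y) * d \<le> 2 * M * d" using dpos by (simp add: mult_right_mono)
      finally have B: "(b z - b y) \<bullet> (x - y) \<le> 2 * M * d" .
      have "2 * M < (\<kappa> - k) * d" using dge k by (simp add: field_simps)
      hence "2 * M * d \<le> (\<kappa> - k) * d * d" using dpos by (simp add: mult_right_mono)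
      hence C: "- \<kappa> * d\<^sup>2 + 2 * M * d \<le> - k * d\<^sup>2" by (simp add: power2_eq_square algebra_simps)
      have "(b x - b y) \<bullet> (x - y) = (b x - b z) \<bullet> (x - y) + (b z - b y) \<bullet> (x - y)"
        by (simp add: inner_diff_left)
      then show ?thesis using A B C unfolding d_def by linarith
    qed
  qed
qed

end
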